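(* Let $\nu\in\mathcal P_{2,0}(\mathbb R^d)$ and $1\le m\le d$. Let $V_m$ be the set of $m$-dimensional linear subspaces of $\mathbb R^d$ and $\mathcal D_m=\{\mu\in\mathcal P_{2,0}(\mathbb R^d):\mu(E)=1\text{ for some }E\in V_m\}$. Then every maximizer of $\operatorname{Var}(\mu)$ over $\{\mu\in\mathcal D_m:\mu\preceq_K\nu\}$ is of the form $(p_E)_\#\nu$ for some $E\in V_m$, where $p_E$ is the orthogonal projection onto $E$.
   Context: $\mathcal P_{2,0}(\mathbb R^d)$: Borel probability measures with finite second moment and zero mean. $\operatorname{Var}(\mu)=\int|x-\int z\,d\mu|^2d\mu$. Kantorovich dominance: $\mu\preceq_K\nu$ iff there is a coupling $\pi$ of $\mu,\nu$ with $\int\langle x-b_\nu,y-x\rangle\,d\pi=0$, $b_\nu=\int y\,d\nu$. *)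

theory Defs
  imports "HOL-Probability.Probability"
begin

definition P20 :: "'a::euclidean_space measure \<Rightarrow> bool" where
  "P20 \<mu> \<longleftrightarrow> prob_space \<mu> \<and> sets \<mu> = sets borel
     \<and> integrable \<mu> (\<lambda>x. (norm x)\<^sup>2) \<and> integral\<^sup>L \<mu> (\<lambda>x. x) = 0"

definition bary :: "'a::euclidean_space measure \<Rightarrow> 'a" where
  "bary \<mu> = integral\<^sup>L \<mu> (\<lambda>x. x)"

definition Var :: "'a::euclidean_space measure \<Rightarrow> real" where
  "Var \<mu> = integral\<^sup>L \<mu> (\<lambda>x. (norm (x - bary \<mu>))\<^sup>2)"

definition coupling :: "('a::euclidean_space \<times> 'a) measure \<Rightarrow> 'a measure \<Rightarrow> 'a measure \<Rightarrow> bool" where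
  "coupling \<pi> \<mu> \<nu> \<longleftrightarrow> prob_space \<pi> \<and> sets \<pi> = sets (borel \<Otimes>\<^sub>M borel)
     \<and> distr \<pi> borel fst = \<mu> \<and> distr \<pi> borel snd = \<nu>"

definition K_dom :: "'a::euclidean_space measure \<Rightarrow> 'a measure \<Rightarrow> bool" where
  "K_dom \<mu> \<nu> \<longleftrightarrow> (\<exists>\<pi>. coupling \<pi> \<mu> \<nu>
     \<and> integrable \<pi> (\<lambda>(x, y). inner (x - bary \<nu>) (y - x))
     \<and> integral\<^sup>L \<pi> (\<lambda>(x, y). inner (x - bary \<nu>) (y - x)) = 0)"

definition Vsub :: "nat \<Rightarrow> 'a::euclidean_space set set" where
  "Vsub m = {E. subspace E \<and> dim E = m}"

definition Dm :: "nat \<Rightarrow> 'a::euclidean_space measure set" where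
  "Dm m = {\<mu>. P20 \<mu> \<and> (\<exists>E\<in>Vsub m. emeasure \<mu> E = 1)}"

definition proj :: "'a::euclidean_space set \<Rightarrow> 'a \<Rightarrow> 'a" where
  "proj E x = (THE y. y \<in> E \<and> (\<forall>z\<in>E. inner (x - y) z = 0))"

end

theory Submission
  imports Defs
begin

lemma proj_props:
  fixes E :: "'a::euclidean_space set"
  assumes "subspace E"
  shows "linear (proj E) \<and> (\<forall>x. proj E x \<in> E) \<and> (\<forall>x. \<forall>z\<in>E. inner (x - proj E x) z = 0)"
proof -
  obtain B where B: "B \<subseteq> E" "pairwise orthogonal B" "\<And>x. x \<in> B \<Longrightarrow> norm x = 1"
    "independent B" "span B = E"
    using orthonormal_basis_subspace[OF assms] by metis
  have fin: "finite B" using B(4) independent_imp_finite by blast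
  define P where "P x = (\<Sum>b\<in>B. inner x b *\<^sub>R b)" for x
  have lin: "linear P"
    unfolding P_def linear_iff
    by (simp add: inner_add_left sum.distrib scaleR_add_left scaleR_sum_right)
  have inE: "P x \<in> E" for x
  proof -
    have "P x \<in> span B" unfolding P_def by (intro span_sum span_scale span_base)
    then show ?thesis using B(5) by simp
  qed
  have orthB: "inner (x - P x) b = 0" if "b \<in> B" for x b
  proof -
    have "inner (P x) b = (\<Sum>c\<in>B. inner x c * inner c b)"
      unfolding P_def by (simp add: inner_sum_left)
    also have "\<dots> = (\<Sum>c\<in>B. if c = b then inner x b else 0)"
    proof (rule sum.cong[OF refl])
      fix c assume c: "c \<in> B"
      show "inner x c * inner c b = (if c = b then inner x b else 0)"
      proof (cases "c = b")
        case True
        then have "inner c b = 1" using B(3)[OF that] by (simp add: norm_eq_1)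
        then show ?thesis using True by simp
      next
        case False
        then have "inner c b = 0" using B(2) c that by (simp add: pairwise_def orthogonal_def)
        then show ?thesis using False by simp
      qed
    qed
    also have "\<dots> = inner x b" using that fin by simp
    finally show ?thesis by (simp add: inner_diff_left)
  qed
  have orth: "\<forall>z\<in>E. inner (x - P x) z = 0" for x
  proof
    fix z assume "z \<in> E"
    then have "z \<in> span B" using B(5) by simp
    then show "inner (x - P x) z = 0"
    proof (rule span_induct[where P="\<lambda>z. inner (x - P x) z = 0"])
      show "subspace {z. inner (x - P x) z = 0}"
        by (rule subspaceI) (auto simp: inner_add_right)
    qed (use orthB in auto)
  qed
  have eq: "proj E x = P x" for x
    unfolding proj_def
  proof (rule the_equality)
    show "P x \<in> E \<and> (\<forall>z\<in>E. inner (x - P x) z = 0)" using inE orth by blast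
  next
    fix y assume y: "y \<in> E \<and> (\<forall>z\<in>E. inner (x - y) z = 0)"
    have d: "y - P x \<in> E" using y inE assms subspace_diff by blast
    have "inner (y - P x) (y - P x) = inner (x - P x) (y - P x) - inner (x - y) (y - P x)"
      by (simp add: inner_diff_left)
    also have "\<dots> = 0" using y orth d by simp
    finally show "y = P x" by simp
  qed
  have "proj E = P" using eq by (rule ext)
  then show ?thesis using lin inE orth by simp
qed

lemma norm_le_sq: "norm (x::'a::real_normed_vector) \<le> 1 + (norm x)\<^sup>2"
proof (cases "norm x \<le> 1")
  case True then show ?thesis by (smt (verit) zero_le_power2)
next
  case False
  then have "norm x * 1 \<le> norm x * norm x" by (intro mult_left_mono) auto
  then show ?thesis by (simp add: power2_eq_square)
qed

theorem mainTheorem16: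
  fixes \<nu> \<mu> :: "'a::euclidean_space measure" and m :: nat
  assumes "P20 \<nu>"
    and "1 \<le> m" and "m \<le> DIM('a)"
    and "\<mu> \<in> Dm m" and "K_dom \<mu> \<nu>"
    and "\<forall>\<mu>'\<in>Dm m. K_dom \<mu>' \<nu> \<longrightarrow> Var \<mu>' \<le> Var \<mu>"
  shows "\<exists>E\<in>Vsub m. \<mu> = distr \<nu> borel (proj E)"
proof -
  from assms(4) obtain E where E: "E \<in> Vsub m" and muE: "emeasure \<mu> E = 1" and Pmu: "P20 \<mu>"
    unfolding Dm_def by blast
  have sE: "subspace E" using E by (simp add: Vsub_def)
  define P where "P = proj E"
  have linP: "linear P" and PE: "\<And>x. P x \<in> E" and orth: "\<And>x z. z \<in> E \<Longrightarrow> inner (x - P x) z = 0"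
    using proj_props[OF sE] unfolding P_def by auto
  have blP: "bounded_linear P" using linP linear_conv_bounded_linear by auto
  have measP[measurable]: "P \<in> borel_measurable borel"
    by (rule borel_measurable_continuous_onI) (rule linear_continuous_on[OF blP])
  have innerP: "inner x y = inner x (P y)" if "x \<in> E" for x y
    using orth[OF that, of y] by (simp add: inner_diff_right inner_diff_left inner_commute)
  have normP: "(norm (P y))\<^sup>2 \<le> (norm y)\<^sup>2" for y
  proof -
    have o: "inner (y - P y) (P y) = 0" using orth[OF PE] .
    have "(norm y)\<^sup>2 = (norm (P y + (y - P y)))\<^sup>2" by simp
    also have "\<dots> = (norm (P y))\<^sup>2 + (norm (y - P y))\<^sup>2"
      by (rule norm_add_Pythagorean) (use o in \<open>simp add: orthogonal_def inner_commute\<close>)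
    finally show ?thesis by simp
  qed
  have Eborel: "E \<in> sets borel" using closed_subspace[OF sE] by simp
  from assms(1) have pnu: "prob_space \<nu>" and snu: "sets \<nu> = sets borel"
    and i2nu: "integrable \<nu> (\<lambda>x. (norm x)\<^sup>2)" and b0: "integral\<^sup>L \<nu> (\<lambda>x. x) = 0"
    unfolding P20_def by auto
  have bnu: "bary \<nu> = 0" using b0 by (simp add: bary_def)
  have mnu: "measurable \<nu> N = measurable borel N" for N :: "'b measure"
    by (rule measurable_cong_sets) (simp_all add: snu)
  interpret nu: prob_space \<nu> by (rule pnu)
  have inu: "integrable \<nu> (\<lambda>x. x)"
  proof -
    have i1: "integrable \<nu> (\<lambda>x. 1 + (norm x)\<^sup>2)" using i2nu by simp
    have m1: "(\<lambda>x. x) \<in> borel_measurable \<nu>" by (simp add: mnu)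
    have a1: "AE x in \<nu>. norm x \<le> norm (1 + (norm x)\<^sup>2)" using norm_le_sq by auto
    show ?thesis using Bochner_Integration.integrable_bound[OF i1 m1 a1] .
  qed
  have measPnu: "P \<in> measurable \<nu> borel" by (simp add: mnu)
  define \<nu>' where "\<nu>' = distr \<nu> borel P"
  have ip2: "integrable \<nu> (\<lambda>y. (norm (P y))\<^sup>2)"
  proof (rule Bochner_Integration.integrable_bound[OF i2nu])
    show "(\<lambda>y. (norm (P y))\<^sup>2) \<in> borel_measurable \<nu>" by (simp add: mnu)
    show "AE x in \<nu>. norm ((norm (P x))\<^sup>2) \<le> norm ((norm x)\<^sup>2)" using normP by auto
  qed
  have bnu': "integral\<^sup>L \<nu>' (\<lambda>x. x) = 0"
  proof -
    have "integral\<^sup>L \<nu>' (\<lambda>x. x) = integral\<^sup>L \<nu> (\<lambda>y. P y)"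
      unfolding \<nu>'_def by (rule integral_distr[OF measPnu]) simp
    also have "\<dots> = P (integral\<^sup>L \<nu> (\<lambda>x. x))" by (rule integral_bounded_linear[OF blP inu])
    also have "\<dots> = 0" using b0 linear_0[OF linP] by simp
    finally show ?thesis .
  qed
  have P20': "P20 \<nu>'"
    unfolding P20_def
  proof (intro conjI)
    show "prob_space \<nu>'" unfolding \<nu>'_def by (rule nu.prob_space_distr[OF measPnu])
    show "sets \<nu>' = sets borel" unfolding \<nu>'_def by simp
    show "integrable \<nu>' (\<lambda>x. (norm x)\<^sup>2)"
      unfolding \<nu>'_def using ip2 by (subst integrable_distr_eq[OF measPnu]) auto
    show "integral\<^sup>L \<nu>' (\<lambda>x. x) = 0" by (rule bnu')
  qed
  have em': "emeasure \<nu>' E = 1"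
  proof -
    have "emeasure \<nu>' E = emeasure \<nu> (P -` E \<inter> space \<nu>)"
      unfolding \<nu>'_def by (rule emeasure_distr[OF measPnu Eborel])
    also have "P -` E \<inter> space \<nu> = space \<nu>" using PE by auto
    finally show ?thesis by (simp add: nu.emeasure_space_1)
  qed
  have D': "\<nu>' \<in> Dm m" unfolding Dm_def using P20' em' E by blast
  have K': "K_dom \<nu>' \<nu>"
  proof -
    define \<pi>' where "\<pi>' = distr \<nu> (borel \<Otimes>\<^sub>M borel) (\<lambda>y. (P y, y))"
    have mpair: "(\<lambda>y. (P y, y)) \<in> measurable \<nu> (borel \<Otimes>\<^sub>M borel)" by (simp add: mnu)
    have c: "coupling \<pi>' \<nu>' \<nu>"
      unfolding coupling_def
    proof (intro conjI)
      show "prob_space \<pi>'" unfolding \<pi>'_def by (rule nu.prob_space_distr[OF mpair])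
      show "sets \<pi>' = sets (borel \<Otimes>\<^sub>M borel)" unfolding \<pi>'_def by simp
      show "distr \<pi>' borel fst = \<nu>'"
        unfolding \<pi>'_def \<nu>'_def by (subst distr_distr[OF _ mpair]) (simp_all add: o_def)
      show "distr \<pi>' borel snd = \<nu>"
        unfolding \<pi>'_def by (subst distr_distr[OF _ mpair]) (simp_all add: o_def distr_id2 snu)
    qed
    have fm: "(\<lambda>(x, y). inner (x - bary \<nu>) (y - x)) \<in> borel_measurable (borel \<Otimes>\<^sub>M borel)"
      by measurable
    have z: "\<And>y. inner (P y - bary \<nu>) (y - P y) = 0"
      using orth[OF PE] by (simp add: bnu inner_commute)
    have "integrable \<pi>' (\<lambda>(x, y). inner (x - bary \<nu>) (y - x))"
      unfolding \<pi>'_def by (subst integrable_distr_eq[OF mpair fm]) (simp add: z)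
    moreover have "integral\<^sup>L \<pi>' (\<lambda>(x, y). inner (x - bary \<nu>) (y - x)) = 0"
      unfolding \<pi>'_def by (subst integral_distr[OF mpair fm]) (simp add: z)
    ultimately show ?thesis unfolding K_dom_def using c by blast
  qed
  have VarLe: "Var \<nu>' \<le> Var \<mu>" using assms(6) D' K' by blast
  have Var': "Var \<nu>' = integral\<^sup>L \<nu> (\<lambda>y. (norm (P y))\<^sup>2)"
  proof -
    have "Var \<nu>' = integral\<^sup>L \<nu>' (\<lambda>x. (norm x)\<^sup>2)" by (simp add: Var_def bary_def bnu')
    also have "\<dots> = integral\<^sup>L \<nu> (\<lambda>y. (norm (P y))\<^sup>2)"
      unfolding \<nu>'_def by (rule integral_distr[OF measPnu]) simp
    finally show ?thesis .
  qed
  from Pmu have pmu: "prob_space \<mu>" and smu: "sets \<mu> = sets borel"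
    and i2mu: "integrable \<mu> (\<lambda>x. (norm x)\<^sup>2)" and bmu0: "integral\<^sup>L \<mu> (\<lambda>x. x) = 0"
    unfolding P20_def by auto
  have VarMu: "Var \<mu> = integral\<^sup>L \<mu> (\<lambda>x. (norm x)\<^sup>2)" by (simp add: Var_def bary_def bmu0)
  from assms(5) obtain \<pi> where c: "coupling \<pi> \<mu> \<nu>"
    and fint: "integrable \<pi> (\<lambda>(x, y). inner (x - bary \<nu>) (y - x))"
    and f0: "integral\<^sup>L \<pi> (\<lambda>(x, y). inner (x - bary \<nu>) (y - x)) = 0"
    unfolding K_dom_def by blast
  from c have ppi: "prob_space \<pi>" and spi: "sets \<pi> = sets (borel \<Otimes>\<^sub>M borel)"
    and mfst: "distr \<pi> borel fst = \<mu>" and msnd: "distr \<pi> borel snd = \<nu>"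
    unfolding coupling_def by auto
  have mpi: "measurable \<pi> N = measurable (borel \<Otimes>\<^sub>M borel) N" for N :: "'b measure"
    by (rule measurable_cong_sets) (simp_all add: spi)
  have mf[measurable]: "fst \<in> measurable \<pi> borel" "snd \<in> measurable \<pi> borel" by (simp_all add: mpi)
  have i1: "integrable \<pi> (\<lambda>z. (norm (fst z))\<^sup>2)"
    using i2mu unfolding mfst[symmetric] by (subst (asm) integrable_distr_eq) simp_all
  have I1: "integral\<^sup>L \<pi> (\<lambda>z. (norm (fst z))\<^sup>2) = Var \<mu>"
  proof -
    have "integral\<^sup>L (distr \<pi> borel fst) (\<lambda>x. (norm x)\<^sup>2) = integral\<^sup>L \<pi> (\<lambda>z. (norm (fst z))\<^sup>2)"
      by (rule integral_distr) simp_all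
    then show ?thesis using VarMu mfst by simp
  qed
  have i2: "integrable \<pi> (\<lambda>z. (norm (P (snd z)))\<^sup>2)"
    using ip2 unfolding msnd[symmetric] by (subst (asm) integrable_distr_eq) simp_all
  have I2: "integral\<^sup>L \<pi> (\<lambda>z. (norm (P (snd z)))\<^sup>2) = Var \<nu>'"
  proof -
    have "integral\<^sup>L (distr \<pi> borel snd) (\<lambda>y. (norm (P y))\<^sup>2) = integral\<^sup>L \<pi> (\<lambda>z. (norm (P (snd z)))\<^sup>2)"
      by (rule integral_distr) simp_all
    then show ?thesis using Var' msnd by simp
  qed
  interpret mu: prob_space \<mu> by (rule pmu)
  have "AE x in \<mu>. x \<in> E"
    by (rule mu.AE_prob_1) (simp add: measure_def muE)
  then have AEE: "AE z in \<pi>. fst z \<in> E"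
    unfolding mfst[symmetric] by (subst (asm) AE_distr_iff) (simp_all add: Eborel)
  define g where "g z = inner (fst z) (P (snd z))" for z
  have gm[measurable]: "g \<in> borel_measurable \<pi>" unfolding g_def by measurable
  have fg: "AE z in \<pi>. g z = (\<lambda>(x, y). inner (x - bary \<nu>) (y - x)) z + (norm (fst z))\<^sup>2"
    using AEE by eventually_elim
      (auto simp: g_def bnu innerP[symmetric] inner_diff_right power2_norm_eq_inner)
  have fm2[measurable]: "(\<lambda>(x, y). inner (x - bary \<nu>) (y - x)) \<in> borel_measurable \<pi>"
    unfolding mpi by measurable
  have ig: "integrable \<pi> g"
  proof (rule integrable_cong_AE_imp[OF _ gm])
    show "integrable \<pi> (\<lambda>z. (\<lambda>(x, y). inner (x - bary \<nu>) (y - x)) z + (norm (fst z))\<^sup>2)"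
      using fint i1 by (rule Bochner_Integration.integrable_add)
    show "AE z in \<pi>. (\<lambda>(x, y). inner (x - bary \<nu>) (y - x)) z + (norm (fst z))\<^sup>2 = g z"
      using fg by (simp add: eq_commute)
  qed
  have Ig: "integral\<^sup>L \<pi> g = Var \<mu>"
  proof -
    have "integral\<^sup>L \<pi> g = integral\<^sup>L \<pi> (\<lambda>z. (\<lambda>(x, y). inner (x - bary \<nu>) (y - x)) z + (norm (fst z))\<^sup>2)"
      by (rule integral_cong_AE[OF gm _ fg]) (use fm2 in measurable)
    also have "\<dots> = Var \<mu>" using fint i1 f0 I1 by simp
    finally show ?thesis .
  qed
  define h where "h z = (norm (fst z - P (snd z)))\<^sup>2" for z
  have hexp: "h z = (norm (fst z))\<^sup>2 - 2 * g z + (norm (P (snd z)))\<^sup>2" for z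
    unfolding h_def g_def
    by (simp add: power2_norm_eq_inner inner_diff_left inner_diff_right inner_commute)
  have ih: "integrable \<pi> h" unfolding hexp[abs_def] using i1 i2 ig by simp
  have Ih: "integral\<^sup>L \<pi> h = Var \<nu>' - Var \<mu>"
    unfolding hexp[abs_def] using i1 i2 ig I1 I2 Ig by simp
  have "integral\<^sup>L \<pi> h \<ge> 0" by (rule integral_nonneg_AE) (simp add: h_def)
  then have "integral\<^sup>L \<pi> h = 0" using Ih VarLe by simp
  then have "AE z in \<pi>. h z = 0"
    using integral_nonneg_eq_0_iff_AE[OF ih] by (simp add: h_def)
  then have AEeq: "AE z in \<pi>. fst z = P (snd z)" by eventually_elim (simp add: h_def)
  have "\<mu> = distr \<pi> borel fst" using mfst by simp
  also have "\<dots> = distr \<pi> borel (\<lambda>z. P (snd z))"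
    by (rule distr_cong_AE[OF refl refl AEeq]) simp_all
  also have "\<dots> = distr (distr \<pi> borel snd) borel P"
    by (subst distr_distr) (simp_all add: o_def)
  also have "\<dots> = distr \<nu> borel (proj E)" using msnd by (simp add: P_def)
  finally show ?thesis using E by blast
qed

end
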